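(* Let $v_2$, $v_3$ and $\delta$ satisfy the standing assumptions described in the context. A deformation $y:H\to\mathbb{R}^3$ is a ground state (i.e. a minimizer of $E$ among all maps $H\to\mathbb{R}^3$) if and only if all its cells are optimal, i.e. every cell $(y(x_1),\dots,y(x_6))$ of $y$ is a minimizer of $E_{\rm cell}$ over $(\mathbb{R}^3)^6$.
   Context: Hexagonal lattice: $H=\{sa+tb+rc: s,t\in\mathbb{Z},\ r\in\{0,1\}\}\subset\mathbb{R}^2$ with $a=(3/2,\sqrt3/2)$, $b=(0,\sqrt3)$, $c=(1,0)$. The hexagonal graph connects points of $H$ at distance $1$. A reference cell is a set $\{x_1,\dots,x_6\}\subset H$ forming a simple cycle (a hexagon) in the hexagonal graph, labeled counterclockwise so that $x_1$ is the vertex of the form $na+mb$ ($n,m\in\mathbb{Z}$) with $n+m$ minimal in the cell. For a deformation $y:H\to\mathbb{R}^3$, the corresponding cell is $(y_1,\dots,y_6)$ with $y_i=y(x_i)$; indices are taken modulo $6$. Barycenters of reference cells are the points $(1/2,\sqrt3/2)+sa+tb$, $(s,t)\in\mathbb{Z}^2$, and the cell is indexed by $(s,t)$. Cell energy: $$E_{\rm cell}(y_1,\dots,y_6)=\tfrac12\sum_{i=1}^6 v_2(|y_i-y_{i-1}|)+\sum_{i=1}^6 v_2(|y_i-y_{i-2}|)+\sum_{i=1}^6 v_3(\theta_i),$$ where $\theta_i\in[0,\pi]$ is the angle at $y_i$ between the segments $\{y_i,y_{i+1}\}$ and $\{y_i,y_{i-1}\}$. Energy of a deformation: $E(y)=\sup_{m\in\mathbb{N}}\frac{1}{\#(T\cap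 B_m)}\sum_{(s,t)\in T\cap B_m}E_{\rm cell}(s,t)$, where $T=(1/2,\sqrt3/2)+\{sa+tb:s,t\in\mathbb{Z}\}$, $B_m$ is the ball of radius $m$ centered at $0$, and $E_{\rm cell}(s,t)$ is the cell energy of the cell with barycenter $(1/2,\sqrt3/2)+sa+tb$. An optimal cell is a minimizer of $E_{\rm cell}$ on $(\mathbb{R}^3)^6$. Standing assumptions: $v_2:(0,\infty)\to[-1,\infty)$ is continuous, attains its minimum value $-1$ only at $1$, is decreasing on $(0,1)$ and increasing on $[1,\infty)$, and is differentiable on $(5/4,\sqrt3]$ with $v_2'>0$ there; $v_3:[0,\pi]\to[0,\infty)$ is continuous, attains its minimum value $0$ only at $2\pi/3$, and is differentiable at $2\pi/3$. Moreover there is $0<\delta\le 0.2$ with: (i) $v_2(1-\delta)>11+12v_2(\sqrt3)$; (ii) $v_2(1+\delta)>-1+12v_2(\sqrt3)-12v_2(\sqrt3(1-\delta)^2)$; (iii) $v_3(\theta)>6+6v_2(\sqrt3)$ whenever $|\theta-2\pi/3|\ge\delta$; (iv) the map $(\ell_1,\ell_2,\theta)\mapsto \frac14 v_2(\ell_1)+\frac14 v_2(\ell_2)+v_2\big((\ell_1^2+\ell_2^2-2\ell_1\ell_2\cos\theta)^{1/2}\big)+v_3(\theta)$ is strictly convex on $\{|\ell_1-1|<\delta,\ |\ell_2-1|<\delta,\ |\theta-2\pi/3|<\delta\}$. *)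

theory Defs
  imports "HOL-Analysis.Analysis" "HOL-Library.Numeral_Type"
begin

definition la :: "real^2" where "la = vector [3/2, sqrt 3 / 2]"
definition lb :: "real^2" where "lb = vector [0, sqrt 3]"
definition lc :: "real^2" where "lc = vector [1, 0]"

definition hex_lattice :: "(real^2) set" where
  "hex_lattice = {of_int s *\<^sub>R la + of_int t *\<^sub>R lb + r *\<^sub>R lc | s t r. r \<in> {0, 1}}"

definition bary :: "int \<Rightarrow> int \<Rightarrow> real^2" where
  "bary s t = vector [1/2, sqrt 3 / 2] + of_int s *\<^sub>R la + of_int t *\<^sub>R lb"

text \<open>Vertices x_1,...,x_6 of the reference cell with barycenter bary s t, labelled
  counterclockwise starting from the vertex of the form n a + m b with n+m minimal.
  Indices live in the numeral type 6 (arithmetic modulo 6; the element 6 equals 0).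
  Concretely x_k = bary s t + (cos(4pi/3 + (k-1)pi/3), sin(4pi/3 + (k-1)pi/3)).\<close>
definition cell_vertex :: "int \<Rightarrow> int \<Rightarrow> 6 \<Rightarrow> real^2" where
  "cell_vertex s t i = of_int s *\<^sub>R la + of_int t *\<^sub>R lb +
     (if i = 1 then 0
      else if i = 2 then lc
      else if i = 3 then la
      else if i = 4 then lb + lc
      else if i = 5 then lb
      else lb - la + lc)"

definition def_cell :: "(real^2 \<Rightarrow> real^3) \<Rightarrow> int \<Rightarrow> int \<Rightarrow> real^3^6" where
  "def_cell y s t = (\<chi> i. y (cell_vertex s t i))"

definition angle_at :: "real^3 \<Rightarrow> real^3 \<Rightarrow> real^3 \<Rightarrow> real" where
  "angle_at p q r = arccos (((q - p) \<bullet> (r - p)) / (norm (q - p) * norm (r - p)))"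

text \<open>Cell energy. Since v2 is only defined on (0,infinity), configurations in which some
  first- or second-neighbour distance vanishes are assigned energy +infinity.\<close>
definition E_cell :: "(real \<Rightarrow> real) \<Rightarrow> (real \<Rightarrow> real) \<Rightarrow> real^3^6 \<Rightarrow> ereal" where
  "E_cell v2 v3 z =
     (if (\<forall>i. z$i \<noteq> z$(i - 1) \<and> z$i \<noteq> z$(i - 2))
      then ereal ((1/2) * (\<Sum>i\<in>UNIV. v2 (norm (z$i - z$(i - 1))))
                 + (\<Sum>i\<in>UNIV. v2 (norm (z$i - z$(i - 2))))
                 + (\<Sum>i\<in>UNIV. v3 (angle_at (z$i) (z$(i + 1)) (z$(i - 1)))))
      else \<infinity>)"

definition cells_in_ball :: "nat \<Rightarrow> (int \<times> int) set" where
  "cells_in_ball m = {(s, t). bary s t \<in> cball 0 (real m)}"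

definition E_def :: "(real \<Rightarrow> real) \<Rightarrow> (real \<Rightarrow> real) \<Rightarrow> (real^2 \<Rightarrow> real^3) \<Rightarrow> ereal" where
  "E_def v2 v3 y = (SUP m\<in>{1..}. (\<Sum>(s, t)\<in>cells_in_ball m. E_cell v2 v3 (def_cell y s t))
                                    / ereal (real (card (cells_in_ball m))))"

definition optimal_cell :: "(real \<Rightarrow> real) \<Rightarrow> (real \<Rightarrow> real) \<Rightarrow> real^3^6 \<Rightarrow> bool" where
  "optimal_cell v2 v3 z \<longleftrightarrow> (\<forall>w. E_cell v2 v3 z \<le> E_cell v2 v3 w)"

definition ground_state :: "(real \<Rightarrow> real) \<Rightarrow> (real \<Rightarrow> real) \<Rightarrow> (real^2 \<Rightarrow> real^3) \<Rightarrow> bool" where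
  "ground_state v2 v3 y \<longleftrightarrow> (\<forall>y'. E_def v2 v3 y \<le> E_def v2 v3 y')"

definition strict_convex_on :: "'a::real_vector set \<Rightarrow> ('a \<Rightarrow> real) \<Rightarrow> bool" where
  "strict_convex_on S f \<longleftrightarrow> convex S \<and>
     (\<forall>x\<in>S. \<forall>y\<in>S. \<forall>u. x \<noteq> y \<and> 0 < u \<and> u < 1 \<longrightarrow>
        f ((1 - u) *\<^sub>R x + u *\<^sub>R y) < (1 - u) * f x + u * f y)"

definition angle_fun :: "(real \<Rightarrow> real) \<Rightarrow> (real \<Rightarrow> real) \<Rightarrow> real \<times> real \<times> real \<Rightarrow> real" where
  "angle_fun v2 v3 = (\<lambda>(l1, l2, \<theta>). (1/4) * v2 l1 + (1/4) * v2 l2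
       + v2 (sqrt (l1\<^sup>2 + l2\<^sup>2 - 2 * l1 * l2 * cos \<theta>)) + v3 \<theta>)"

definition standing_assumptions :: "(real \<Rightarrow> real) \<Rightarrow> (real \<Rightarrow> real) \<Rightarrow> real \<Rightarrow> bool" where
  "standing_assumptions v2 v3 \<delta> \<longleftrightarrow>
     continuous_on {0<..} v2 \<and>
     v2 1 = -1 \<and> (\<forall>r>0. r \<noteq> 1 \<longrightarrow> v2 r > -1) \<and>
     (\<forall>r s. 0 < r \<and> r \<le> s \<and> s < 1 \<longrightarrow> v2 s \<le> v2 r) \<and>
     (\<forall>r s. 1 \<le> r \<and> r \<le> s \<longrightarrow> v2 r \<le> v2 s) \<and>
     (\<forall>r\<in>{5/4<..sqrt 3}. \<exists>d>0. (v2 has_real_derivative d) (at r within {5/4<..sqrt 3})) \<and>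
     continuous_on {0..pi} v3 \<and>
     v3 (2*pi/3) = 0 \<and> (\<forall>\<theta>\<in>{0..pi}. \<theta> \<noteq> 2*pi/3 \<longrightarrow> v3 \<theta> > 0) \<and>
     v3 differentiable (at (2*pi/3)) \<and>
     0 < \<delta> \<and> \<delta> \<le> 0.2 \<and>
     v2 (1 - \<delta>) > 11 + 12 * v2 (sqrt 3) \<and>
     v2 (1 + \<delta>) > -1 + 12 * v2 (sqrt 3) - 12 * v2 (sqrt 3 * (1 - \<delta>)\<^sup>2) \<and>
     (\<forall>\<theta>\<in>{0..pi}. \<bar>\<theta> - 2*pi/3\<bar> \<ge> \<delta> \<longrightarrow> v3 \<theta> > 6 + 6 * v2 (sqrt 3)) \<and>
     strict_convex_on {(l1, l2, \<theta>). \<bar>l1 - 1\<bar> < \<delta> \<and> \<bar>l2 - 1\<bar> < \<delta> \<and> \<bar>\<theta> - 2*pi/3\<bar> < \<delta>}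
       (angle_fun v2 v3)"

end

theory Submission
  imports Defs
begin

lemma exhaust_6:
  fixes x :: 6
  shows "x = 0 \<or> x = 1 \<or> x = 2 \<or> x = 3 \<or> x = 4 \<or> x = 5"
proof (induct x)
  case (of_int z)
  then have "z = 0 \<or> z = 1 \<or> z = 2 \<or> z = 3 \<or> z = 4 \<or> z = 5" by fastforce
  then show ?case by auto
qed

lemma forall_6: "(\<forall>i::6. P i) \<longleftrightarrow> P 0 \<and> P 1 \<and> P 2 \<and> P 3 \<and> P 4 \<and> P 5"
  by (metis exhaust_6)

lemma sum_shift6: "(\<Sum>i\<in>UNIV. g (i + 1)) = (\<Sum>i\<in>(UNIV::6 set). g i)"
  by (rule sum.reindex_bij_witness[where i="\<lambda>i. i - 1" and j="\<lambda>i. i + 1"]) auto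

lemma card6: "card (UNIV :: 6 set) = 6" by simp

lemma cos_lb: "0 \<le> d \<Longrightarrow> 1 - d\<^sup>2/2 \<le> cos (d::real)"
proof -
  assume d: "0 \<le> d"
  have c: "cos d = 1 - 2 * (sin (d/2))\<^sup>2"
    using cos_double_sin[of "d/2"] by simp
  have "\<bar>sin (d/2)\<bar> \<le> \<bar>d/2\<bar>" by (rule abs_sin_x_le_abs_x)
  then have "(sin (d/2))\<^sup>2 \<le> (d/2)\<^sup>2"
    by (metis abs_le_square_iff)
  then show ?thesis using c by (simp add: power_divide)
qed

lemma aux1: "(A::real) \<le> 2*(1-X) \<Longrightarrow> c \<le> X \<Longrightarrow> A \<le> 2*(1-c)" by argo

lemma trig_bound:
  fixes a b t d :: real
  assumes d: "0 < d" "d \<le> 0.2" and a: "1 - d \<le> a" and b: "1 - d \<le> b"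
    and t: "2*pi/3 - d \<le> t" "t \<le> pi"
  shows "3 * (1-d)^4 \<le> a\<^sup>2 + b\<^sup>2 - 2*a*b*cos t"
proof -
  have "cos t \<le> cos (2*pi/3 - d)"
    by (rule cos_monotone_0_pi_le) (use t d pi_gt3 in auto)
  also have "\<dots> = -1/2 * cos d + sqrt 3 / 2 * sin d"
    by (simp add: cos_diff cos_120 sin_120)
  also have "\<dots> \<le> -1/2 * (1 - d\<^sup>2/2) + sqrt 3 / 2 * d"
  proof -
    have "cos d \<ge> 1 - d\<^sup>2/2" using cos_lb d by auto
    moreover have "sin d \<le> d" using sin_x_le_x d by auto
    moreover have "sqrt 3 \<ge> 0" by simp
    moreover have "sqrt 3 / 2 * sin d \<le> sqrt 3 / 2 * d" using \<open>sin d \<le> d\<close> by (intro mult_left_mono) simp_all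
    moreover have "-1/2 * cos d \<le> -1/2 * (1 - d\<^sup>2/2)" using \<open>cos d \<ge> 1 - d\<^sup>2/2\<close> by simp
    ultimately show ?thesis by (intro add_mono) simp_all
  qed
  finally have ct: "cos t \<le> -1/2 * (1 - d\<^sup>2/2) + sqrt 3 / 2 * d" .
  have s3: "sqrt 3 < 2"
    by (rule real_less_lsqrt) auto
  have key: "3 * (1-d)\<^sup>2 \<le> 2 * (1 - cos t)"
  proof -
    have e1: "3 * (1-d)\<^sup>2 = 3 - 6*d + 3*d\<^sup>2" by (simp add: power2_eq_square algebra_simps)
    have e2: "2 * (1 - (-1/2 * (1 - d\<^sup>2/2) + sqrt 3 / 2 * d)) = 3 - d\<^sup>2/2 - sqrt 3 * d"
      by (simp add: algebra_simps)
    have "sqrt 3 * d \<le> 2 * d" using s3 d by (intro mult_right_mono) auto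
    moreover have "d\<^sup>2 \<le> 0.2 * d" using d by (simp add: power2_eq_square mult_right_mono)
    ultimately have "3 * (1-d)\<^sup>2 \<le> 2 * (1 - (-1/2 * (1 - d\<^sup>2/2) + sqrt 3 / 2 * d))"
      unfolding e1 e2 using d by linarith
    then show ?thesis using ct
      by (rule aux1)
  qed
  have ab: "(1-d)\<^sup>2 \<le> a * b"
    using a b d by (simp add: power2_eq_square mult_mono)
  have ct1: "0 \<le> 1 - cos t" by simp
  have "2*a*b \<le> a\<^sup>2 + b\<^sup>2"
    using sum_squares_ge_zero[of "a - b" 0] by (simp add: power2_eq_square algebra_simps)
  then have s1: "a\<^sup>2 + b\<^sup>2 - 2*a*b*cos t \<ge> 2*a*b*(1 - cos t)"
  proof -
    assume h: "2*a*b \<le> a\<^sup>2 + b\<^sup>2"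
    have "a\<^sup>2 + b\<^sup>2 - 2*a*b*cos t - 2*a*b*(1 - cos t) = a\<^sup>2 + b\<^sup>2 - 2*a*b"
      by (simp add: algebra_simps)
    then show ?thesis using h by linarith
  qed
  have "(1-d)\<^sup>2 * (3 * (1-d)\<^sup>2) \<le> (a*b) * (2 * (1 - cos t))"
    by (rule mult_mono[OF ab key]) (use a b d in \<open>auto intro!: mult_nonneg_nonneg\<close>)
  moreover have "(1-d)\<^sup>2 * (3 * (1-d)\<^sup>2) = 3 * (1-d)^4" by (simp add: power2_eq_square power4_eq_xxxx)
  moreover have "(a*b) * (2 * (1 - cos t)) = 2*a*b*(1 - cos t)" by simp
  ultimately show ?thesis using s1 by linarith
qed


context
  fixes v2 v3 :: "real \<Rightarrow> real" and \<delta> :: real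
  assumes sa: "standing_assumptions v2 v3 \<delta>"
begin

lemma v2_ge: "r > 0 \<Longrightarrow> v2 r \<ge> -1"
  using sa unfolding standing_assumptions_def by (metis order.refl less_le)

lemma v3_ge: "0 \<le> t \<Longrightarrow> t \<le> pi \<Longrightarrow> v3 t \<ge> 0"
  using sa unfolding standing_assumptions_def by (metis atLeastAtMost_iff order.refl less_le)

lemma v2_dec: "0 < r \<Longrightarrow> r \<le> s \<Longrightarrow> s < 1 \<Longrightarrow> v2 s \<le> v2 r"
  using sa unfolding standing_assumptions_def by blast

lemma v2_inc: "1 \<le> r \<Longrightarrow> r \<le> s \<Longrightarrow> v2 r \<le> v2 s"
  using sa unfolding standing_assumptions_def by blast

lemma v2_1: "v2 1 = -1" using sa unfolding standing_assumptions_def by blast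
lemma v3_0: "v3 (2*pi/3) = 0" using sa unfolding standing_assumptions_def by blast
lemma dpos: "0 < \<delta>" and dle: "\<delta> \<le> 0.2" using sa unfolding standing_assumptions_def by auto
lemma condi: "v2 (1 - \<delta>) > 11 + 12 * v2 (sqrt 3)" using sa unfolding standing_assumptions_def by auto
lemma condii: "v2 (1 + \<delta>) > -1 + 12 * v2 (sqrt 3) - 12 * v2 (sqrt 3 * (1 - \<delta>)\<^sup>2)"
  using sa unfolding standing_assumptions_def by auto
lemma condiii: "0 \<le> t \<Longrightarrow> t \<le> pi \<Longrightarrow> \<bar>t - 2*pi/3\<bar> \<ge> \<delta> \<Longrightarrow> v3 t > 6 + 6 * v2 (sqrt 3)"
  using sa unfolding standing_assumptions_def by auto

definition "dbox = {(l1, l2, \<theta>). \<bar>l1 - 1\<bar> < \<delta> \<and> \<bar>l2 - 1\<bar> < \<delta> \<and> \<bar>\<theta> - 2*pi/3\<bar> < (\<delta>::real)}"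

lemma conv: "convex_on dbox (angle_fun v2 v3)"
proof -
  have sc: "strict_convex_on dbox (angle_fun v2 v3)"
    using sa unfolding standing_assumptions_def dbox_def by auto
  then have cb: "convex dbox" unfolding strict_convex_on_def by auto
  show ?thesis unfolding convex_on_def
  proof (intro conjI cb ballI allI impI)
    fix x y and u v :: real
    assume x: "x \<in> dbox" and y: "y \<in> dbox" and uv: "0 \<le> u" "0 \<le> v" "u + v = 1"
    show "angle_fun v2 v3 (u *\<^sub>R x + v *\<^sub>R y) \<le> u * angle_fun v2 v3 x + v * angle_fun v2 v3 y"
    proof (cases "x = y \<or> v = 0 \<or> v = 1")
      case True
      then show ?thesis
      proof (elim disjE)
        assume "x = y" then show ?thesis using uv by (simp add: scaleR_left_distrib[symmetric] distrib_right[symmetric])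
      next
        assume "v = 0" then show ?thesis using uv by simp
      next
        assume "v = 1" then show ?thesis using uv by simp
      qed
    next
      case False
      then have "x \<noteq> y" "0 < v" "v < 1" using uv by auto
      then have "angle_fun v2 v3 ((1 - v) *\<^sub>R x + v *\<^sub>R y) < (1 - v) * angle_fun v2 v3 x + v * angle_fun v2 v3 y"
        using sc x y unfolding strict_convex_on_def by blast
      moreover have "1 - v = u" using uv by simp
      ultimately show ?thesis by simp
    qed
  qed
qed

lemma af_ref: "angle_fun v2 v3 (1, 1, 2*pi/3) = -1/2 + v2 (sqrt 3)"
  unfolding angle_fun_def by (simp add: cos_120 v2_1 v3_0)

lemma sqrt3_gt: "sqrt 3 > (1.7::real)"
  by (rule real_less_rsqrt) (simp add: power2_eq_square)

lemma LB:
  fixes L T :: "6 \<Rightarrow> real"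
  assumes L: "\<And>i. L i > 0" and T0: "\<And>i. 0 \<le> T i" and T1: "\<And>i. T i \<le> pi"
    and D: "\<And>i. (L (i+1))\<^sup>2 + (L i)\<^sup>2 - 2 * L (i+1) * L i * cos (T i) > 0"
  shows "\<exists>l t. 0 < l \<and> 0 < t \<and> t \<le> 2*pi/3 \<and>
           6 * angle_fun v2 v3 (l, l, t) \<le> (\<Sum>i\<in>UNIV. angle_fun v2 v3 (L (i+1), L i, T i))"
proof -
  define Dd where "Dd i = sqrt ((L (i+1))\<^sup>2 + (L i)\<^sup>2 - 2 * L (i+1) * L i * cos (T i))" for i
  define S where "S = (\<Sum>i\<in>UNIV. angle_fun v2 v3 (L (i+1), L i, T i))"
  define SV where "SV = (\<Sum>i\<in>UNIV. v2 (L i))"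
  define SW where "SW = (\<Sum>i\<in>UNIV. v2 (Dd i))"
  define SU where "SU = (\<Sum>i\<in>UNIV. v3 (T i))"
  have Sdec: "S = 1/2 * SV + SW + SU"
  proof -
    have "S = (\<Sum>i\<in>UNIV. 1/4 * v2 (L (i+1))) + (\<Sum>i\<in>UNIV. 1/4 * v2 (L i)) + SW + SU"
      unfolding S_def angle_fun_def Dd_def SW_def SU_def by (simp add: sum.distrib)
    also have "(\<Sum>i\<in>UNIV. 1/4 * v2 (L (i+1))) = (\<Sum>i\<in>UNIV. 1/4 * v2 (L i))"
      using sum_shift6[of "\<lambda>i. 1/4 * v2 (L i)"] by simp
    finally show ?thesis unfolding SV_def by (simp add: sum_divide_distrib[symmetric])
  qed
  have Dpos: "Dd i > 0" for i unfolding Dd_def using D by simp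
  have hV: "v2 (L i) \<ge> -1" for i using v2_ge L by auto
  have hW: "v2 (Dd i) \<ge> -1" for i using v2_ge Dpos by auto
  have hU: "v3 (T i) \<ge> 0" for i using v3_ge T0 T1 by auto
  have sV: "SV \<ge> -6" unfolding SV_def using sum_mono[of UNIV "\<lambda>_. -1" "\<lambda>i. v2 (L i)"] hV by simp
  have sW: "SW \<ge> -6" unfolding SW_def using sum_mono[of UNIV "\<lambda>_. -1" "\<lambda>i. v2 (Dd i)"] hW by simp
  have sU: "SU \<ge> 0" unfolding SU_def using sum_nonneg[of UNIV "\<lambda>i. v3 (T i)"] hU by simp
  have sV1: "SV \<ge> v2 (L i0) - 5" for i0
  proof -
    have "v2 (L i0) + 1 \<le> (\<Sum>i\<in>UNIV. v2 (L i) + 1)"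
      proof (rule member_le_sum)
      fix x show "0 \<le> v2 (L x) + 1" using hV[of x] by linarith
    qed auto
    also have "\<dots> = SV + 6" unfolding SV_def by (simp add: sum.distrib)
    finally show ?thesis by simp
  qed
  have refcase: "S > -3 + 6 * v2 (sqrt 3) \<Longrightarrow> ?thesis"
  proof -
    assume "S > -3 + 6 * v2 (sqrt 3)"
    moreover have "6 * angle_fun v2 v3 (1, 1, 2*pi/3) = -3 + 6 * v2 (sqrt 3)"
      using af_ref by simp
    ultimately show ?thesis unfolding S_def
      by (intro exI[of _ 1] exI[of _ "2*pi/3"]) auto
  qed
  have d: "0 < \<delta>" "\<delta> \<le> 0.2" using dpos dle by auto
  show ?thesis
  proof (cases "\<exists>i0. L i0 \<le> 1 - \<delta>")
    case True
    then obtain i0 where i0: "L i0 \<le> 1 - \<delta>" by blast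
    have "v2 (1 - \<delta>) \<le> v2 (L i0)" using v2_dec[of "L i0" "1 - \<delta>"] i0 L d by auto
    then have "S > -3 + 6 * v2 (sqrt 3)" using Sdec sV1[of i0] sW sU condi by linarith
    then show ?thesis by (rule refcase)
  next
    case nA: False
    show ?thesis
    proof (cases "\<exists>i0. \<bar>T i0 - 2*pi/3\<bar> \<ge> \<delta>")
      case True
      then obtain i0 where i0: "\<bar>T i0 - 2*pi/3\<bar> \<ge> \<delta>" by blast
      have "v3 (T i0) \<le> SU" unfolding SU_def by (rule member_le_sum) (use hU in auto)
      moreover have "v3 (T i0) > 6 + 6 * v2 (sqrt 3)" using condiii i0 T0 T1 by blast
      ultimately have "S > -3 + 6 * v2 (sqrt 3)" using Sdec sV sW by linarith
      then show ?thesis by (rule refcase)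
    next
      case nC: False
      have Lg: "L i > 1 - \<delta>" for i using nA by (meson not_le)
      have Tg: "\<bar>T i - 2*pi/3\<bar> < \<delta>" for i using nC by (meson not_le)
      show ?thesis
      proof (cases "\<exists>i0. L i0 \<ge> 1 + \<delta>")
        case True
        then obtain i0 where i0: "L i0 \<ge> 1 + \<delta>" by blast
        define q where "q = sqrt 3 * (1 - \<delta>)\<^sup>2"
        have q1: "1 \<le> q"
        proof -
          have "(0.8::real) * 0.8 \<le> (1 - \<delta>) * (1 - \<delta>)" using d by (intro mult_mono) auto
          then have "0.64 \<le> (1 - \<delta>)\<^sup>2" by (simp add: power2_eq_square)
          moreover have "1.7 * 0.64 \<le> sqrt 3 * (1 - \<delta>)\<^sup>2"
            using sqrt3_gt calculation by (intro mult_mono) auto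
          ultimately show ?thesis unfolding q_def by simp
        qed
        have Dq: "Dd i \<ge> q" for i
        proof -
          have "3 * (1 - \<delta>)^4 \<le> (L (i+1))\<^sup>2 + (L i)\<^sup>2 - 2 * L (i+1) * L i * cos (T i)"
            using trig_bound[of \<delta> "L (i+1)" "L i" "T i"] d Lg[of "i+1"] Lg[of i] Tg[of i] T1[of i] by force
          then have "sqrt (3 * (1 - \<delta>)^4) \<le> Dd i" unfolding Dd_def by (rule real_sqrt_le_mono)
          moreover have "sqrt (3 * (1 - \<delta>)^4) = q" unfolding q_def
          proof -
            have "(1 - \<delta>)^4 = ((1-\<delta>)\<^sup>2)\<^sup>2" by simp
            then show "sqrt (3 * (1 - \<delta>)^4) = sqrt 3 * (1 - \<delta>)\<^sup>2" by (simp only: real_sqrt_mult real_sqrt_abs abs_power2)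
          qed
          ultimately show ?thesis by simp
        qed
        have "v2 q \<le> v2 (Dd i)" for i using v2_inc q1 Dq by blast
        then have sWq: "SW \<ge> 6 * v2 q" unfolding SW_def using sum_mono[of UNIV "\<lambda>_. v2 q" "\<lambda>i. v2 (Dd i)"] by simp
        have "v2 (1 + \<delta>) \<le> v2 (L i0)" using v2_inc[of "1 + \<delta>" "L i0"] i0 d by auto
        then have "S > -3 + 6 * v2 (sqrt 3)" using Sdec sV1[of i0] sWq sU condii unfolding q_def by linarith
        then show ?thesis by (rule refcase)
      next
        case nB: False
        have Ll: "L i < 1 + \<delta>" for i using nB by (meson not_le)
        define P where "P i = (L (i+1), L i, T i)" for i
        have Pin: "P i \<in> dbox" for i
          unfolding P_def dbox_def using Ll[of i] Ll[of "i+1"] Lg[of i] Lg[of "i+1"] Tg[of i] by auto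
        define lb where "lb = (\<Sum>i\<in>UNIV. L i) / 6"
        define tb where "tb = (\<Sum>i\<in>UNIV. T i) / 6"
        have avg: "(\<Sum>i\<in>UNIV. (1/6) *\<^sub>R P i) = (lb, lb, tb)"
        proof -
          have "(\<Sum>i\<in>UNIV. L (i+1) / 6) = (\<Sum>i\<in>UNIV. L i / 6)" by (rule sum_shift6)
          then show ?thesis unfolding P_def lb_def tb_def
            by (simp add: prod_eq_iff fst_sum snd_sum sum_divide_distrib)
        qed
        have J: "angle_fun v2 v3 (\<Sum>i\<in>UNIV. (1/6) *\<^sub>R P i) \<le> (\<Sum>i\<in>UNIV. (1/6) * angle_fun v2 v3 (P i))"
          by (rule convex_on_sum[OF _ _ conv]) (auto simp: Pin)
        have J6: "6 * angle_fun v2 v3 (lb, lb, tb) \<le> S"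
          using J[unfolded avg] unfolding S_def P_def by (simp add: sum_divide_distrib[symmetric])
        have lbg: "lb > 1 - \<delta>"
        proof -
          have "(\<Sum>i\<in>(UNIV::6 set). 1 - \<delta>) < (\<Sum>i\<in>UNIV. L i)"
            by (rule sum_strict_mono) (auto simp: Lg)
          then show ?thesis unfolding lb_def by simp
        qed
        have Tg1: "2*pi/3 - \<delta> < T i" "T i < 2*pi/3 + \<delta>" for i using Tg[of i] by (simp_all add: abs_less_iff)
        have tbg: "tb > 2*pi/3 - \<delta>" and tbl: "tb < 2*pi/3 + \<delta>"
        proof -
          have "(\<Sum>i\<in>(UNIV::6 set). 2*pi/3 - \<delta>) < (\<Sum>i\<in>UNIV. T i)"
            by (rule sum_strict_mono) (auto simp: Tg1)
          then show "tb > 2*pi/3 - \<delta>" unfolding tb_def by simp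
          have "(\<Sum>i\<in>UNIV. T i) < (\<Sum>i\<in>(UNIV::6 set). 2*pi/3 + \<delta>)"
            by (rule sum_strict_mono) (auto simp: Tg1)
          then show "tb < 2*pi/3 + \<delta>" unfolding tb_def by simp
        qed
        have lbp: "lb > 0" using lbg d by linarith
        have pi3: "pi > 3" by (rule pi_gt3)
        show ?thesis
        proof (cases "tb \<le> 2*pi/3")
          case True
          have "tb > 0" using tbg d pi3 by linarith
          then show ?thesis using True J6 lbp unfolding S_def by blast
        next
          case False
          have "angle_fun v2 v3 (lb, lb, 2*pi/3) \<le> angle_fun v2 v3 (lb, lb, tb)"
          proof -
            have ct: "cos tb \<le> cos (2*pi/3)"
              by (rule cos_monotone_0_pi_le) (use False tbl d pi3 in auto)
            have e3: "lb\<^sup>2 + lb\<^sup>2 - 2 * lb * lb * cos (2*pi/3) = 3 * lb\<^sup>2"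
              by (simp add: cos_120 power2_eq_square)
            have "lb\<^sup>2 + lb\<^sup>2 - 2 * lb * lb * cos (2*pi/3) \<le> lb\<^sup>2 + lb\<^sup>2 - 2 * lb * lb * cos tb"
              using ct lbp by (simp add: mult_left_mono)
            then have sq: "sqrt (lb\<^sup>2 + lb\<^sup>2 - 2 * lb * lb * cos (2*pi/3)) \<le> sqrt (lb\<^sup>2 + lb\<^sup>2 - 2 * lb * lb * cos tb)"
              by (rule real_sqrt_le_mono)
            have "sqrt (lb\<^sup>2 + lb\<^sup>2 - 2 * lb * lb * cos (2*pi/3)) = sqrt 3 * lb"
              unfolding e3 using lbp by (simp add: real_sqrt_mult)
            moreover have "sqrt 3 * lb \<ge> 1"
            proof -
              have "1.7 * 0.8 \<le> sqrt 3 * lb" using sqrt3_gt lbg d by (intro mult_mono) auto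
              then show ?thesis by simp
            qed
            ultimately have "v2 (sqrt (lb\<^sup>2 + lb\<^sup>2 - 2 * lb * lb * cos (2*pi/3))) \<le> v2 (sqrt (lb\<^sup>2 + lb\<^sup>2 - 2 * lb * lb * cos tb))"
              using v2_inc sq by simp
            moreover have "v3 tb \<ge> 0" using v3_ge[of tb] False tbl d pi3 by auto
            ultimately show ?thesis unfolding angle_fun_def using v3_0 by simp
          qed
          then have "6 * angle_fun v2 v3 (lb, lb, 2*pi/3) \<le> S" using J6 by linarith
          then show ?thesis using lbp unfolding S_def by (intro exI[of _ lb] exI[of _ "2*pi/3"]) auto
        qed
      qed
    qed
  qed
qed

end

lemma angle_cos:
  fixes p q r :: "real^3"
  assumes "q \<noteq> p" "r \<noteq> p"
  shows "cos (angle_at p q r) = ((q - p) \<bullet> (r - p)) / (norm (q - p) * norm (r - p))"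
    and "0 \<le> angle_at p q r" "angle_at p q r \<le> pi"
proof -
  define x where "x = ((q - p) \<bullet> (r - p)) / (norm (q - p) * norm (r - p))"
  have np: "norm (q - p) * norm (r - p) > 0" using assms by simp
  have "\<bar>(q - p) \<bullet> (r - p)\<bar> \<le> norm (q - p) * norm (r - p)" by (rule Cauchy_Schwarz_ineq2)
  then have "\<bar>x\<bar> \<le> 1" unfolding x_def using np by (simp add: abs_divide divide_le_eq_1)
  then have x1: "-1 \<le> x" "x \<le> 1" by auto
  show "cos (angle_at p q r) = x" unfolding angle_at_def x_def[symmetric] using x1 by (simp add: cos_arccos)
  show "0 \<le> angle_at p q r" unfolding angle_at_def x_def[symmetric] using x1 by (simp add: arccos_lbound)
  show "angle_at p q r \<le> pi" unfolding angle_at_def x_def[symmetric] using x1 by (simp add: arccos_ubound)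
qed

lemma law_cos:
  fixes p q r :: "real^3"
  assumes "q \<noteq> p" "r \<noteq> p"
  shows "(norm (q - r))\<^sup>2 = (norm (q - p))\<^sup>2 + (norm (r - p))\<^sup>2 - 2 * norm (q - p) * norm (r - p) * cos (angle_at p q r)"
proof -
  have np: "norm (q - p) * norm (r - p) > 0" using assms by simp
  have "2 * norm (q - p) * norm (r - p) * cos (angle_at p q r) = 2 * ((q - p) \<bullet> (r - p))"
    unfolding angle_cos(1)[OF assms] using np by simp
  moreover have "q - r = (q - p) - (r - p)" by simp
  then have "(norm (q - r))\<^sup>2 = (norm (q - p))\<^sup>2 + (norm (r - p))\<^sup>2 - 2 * ((q - p) \<bullet> (r - p))"
    by (simp only: power2_norm_eq_inner inner_diff_left inner_diff_right inner_commute) (simp add: inner_commute)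
  ultimately show ?thesis by simp
qed

lemma six_arith: "(i::6) + 1 - 2 = i - 1" "(i::6) + 1 - 1 = i"
  by (simp_all add: algebra_simps)

lemma cell_decomp:
  fixes z :: "real^3^6"
  assumes nd: "\<forall>i. z$i \<noteq> z$(i - 1) \<and> z$i \<noteq> z$(i - 2)"
  defines "L \<equiv> \<lambda>i. norm (z$i - z$(i - 1))"
  defines "T \<equiv> \<lambda>i. angle_at (z$i) (z$(i + 1)) (z$(i - 1))"
  shows "E_cell v2 v3 z = ereal (\<Sum>i\<in>UNIV. angle_fun v2 v3 (L (i+1), L i, T i))"
    and "\<And>i. L i > 0" "\<And>i. 0 \<le> T i" "\<And>i. T i \<le> pi"
    and "\<And>i. (L (i+1))\<^sup>2 + (L i)\<^sup>2 - 2 * L (i+1) * L i * cos (T i) > 0"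
proof -
  have n1: "z$(i+1) \<noteq> z$i" for i using nd[rule_format, of "i+1"] by (simp add: six_arith)
  have n2: "z$(i-1) \<noteq> z$i" for i using nd by metis
  have n3: "z$(i+1) \<noteq> z$(i-1)" for i using nd[rule_format, of "i+1"] by (simp add: six_arith)
  have Lsh: "L (i+1) = norm (z$(i+1) - z$i)" for i unfolding L_def by (simp add: six_arith)
  have Lm: "L i = norm (z$(i-1) - z$i)" for i unfolding L_def by (simp add: norm_minus_commute)
  have lc: "(norm (z$(i+1) - z$(i-1)))\<^sup>2 = (L (i+1))\<^sup>2 + (L i)\<^sup>2 - 2 * L (i+1) * L i * cos (T i)" for i
    using law_cos[OF n1 n2] unfolding T_def by (simp only: Lsh Lm[of i])
  show "L i > 0" for i unfolding L_def using nd by auto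
  show "0 \<le> T i" for i unfolding T_def by (rule angle_cos(2)[OF n1 n2])
  show "T i \<le> pi" for i unfolding T_def by (rule angle_cos(3)[OF n1 n2])
  show "(L (i+1))\<^sup>2 + (L i)\<^sup>2 - 2 * L (i+1) * L i * cos (T i) > 0" for i
    unfolding lc[symmetric] using n3[of i] by simp
  have sq: "sqrt ((L (i+1))\<^sup>2 + (L i)\<^sup>2 - 2 * L (i+1) * L i * cos (T i)) = norm (z$(i+1) - z$(i-1))" for i
    unfolding lc[symmetric] by simp
  have s1: "(\<Sum>i\<in>UNIV. v2 (norm (z$i - z$(i - 2)))) = (\<Sum>i\<in>UNIV. v2 (norm (z$(i+1) - z$(i - 1))))"
    using sum_shift6[of "\<lambda>i. v2 (norm (z$i - z$(i - 2)))"] by (simp add: six_arith)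
  have s2: "(\<Sum>i\<in>UNIV. 1/4 * v2 (L (i+1))) = (\<Sum>i\<in>UNIV. 1/4 * v2 (L i))"
    using sum_shift6[of "\<lambda>i. 1/4 * v2 (L i)"] by simp
  have "(\<Sum>i\<in>UNIV. angle_fun v2 v3 (L (i+1), L i, T i)) =
      (\<Sum>i\<in>UNIV. 1/4 * v2 (L (i+1))) + (\<Sum>i\<in>UNIV. 1/4 * v2 (L i))
      + (\<Sum>i\<in>UNIV. v2 (norm (z$(i+1) - z$(i - 1)))) + (\<Sum>i\<in>UNIV. v3 (T i))"
    unfolding angle_fun_def by (simp add: sum.distrib sq)
  also have "\<dots> = (1/2) * (\<Sum>i\<in>UNIV. v2 (norm (z$i - z$(i - 1))))
                 + (\<Sum>i\<in>UNIV. v2 (norm (z$i - z$(i - 2))))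
                 + (\<Sum>i\<in>UNIV. v3 (angle_at (z$i) (z$(i + 1)) (z$(i - 1))))"
    unfolding s2 s1 by (simp add: L_def T_def sum_divide_distrib[symmetric])
  finally show "E_cell v2 v3 z = ereal (\<Sum>i\<in>UNIV. angle_fun v2 v3 (L (i+1), L i, T i))"
    unfolding E_cell_def using nd by simp
qed

context
  fixes v2 v3 :: "real \<Rightarrow> real" and \<delta> :: real
  assumes sa: "standing_assumptions v2 v3 \<delta>"
begin

lemma cell_lb: "\<exists>l t. 0 < l \<and> 0 < t \<and> t \<le> 2*pi/3 \<and> ereal (6 * angle_fun v2 v3 (l, l, t)) \<le> E_cell v2 v3 z"
proof (cases "\<forall>i. z$i \<noteq> z$(i - 1) \<and> z$i \<noteq> z$(i - 2)")
  case True
  note cd = cell_decomp[OF True]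
  obtain l t where lt: "0 < l" "0 < t" "t \<le> 2*pi/3"
    "6 * angle_fun v2 v3 (l, l, t) \<le> (\<Sum>i\<in>UNIV. angle_fun v2 v3 (norm (z$(i+1) - z$(i + 1 - 1)), norm (z$i - z$(i - 1)), angle_at (z$i) (z$(i + 1)) (z$(i - 1))))"
    using LB[OF sa, of "\<lambda>i. norm (z$i - z$(i - 1))" "\<lambda>i. angle_at (z$i) (z$(i + 1)) (z$(i - 1))"] cd(2-5) by blast
  then show ?thesis using cd(1)[of v2 v3] by auto
next
  case False
  then have "E_cell v2 v3 z = \<infinity>" unfolding E_cell_def by auto
  moreover have "(0::real) < 2*pi/3" by simp
  ultimately show ?thesis by (intro exI[of _ 1] exI[of _ "2*pi/3"]) auto
qed

end


lemma vec3_diff: "(vector [a,b,c]::real^3) - vector [d,e,f] = vector [a-d, b-e, c-f]"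
  by (simp add: vec_eq_iff forall_3 vector_3)

lemma vec3_norm: "norm (vector [a,b,c]::real^3) = sqrt (a\<^sup>2 + b\<^sup>2 + c\<^sup>2)"
  by (simp add: norm_eq_sqrt_inner inner_vec_def sum_3 vector_3 power2_eq_square)

lemma vec3_inner: "(vector [a,b,c]::real^3) \<bullet> vector [d,e,f] = a*d + b*e + c*f"
  by (simp add: inner_vec_def sum_3 vector_3)

definition OX :: "6 \<Rightarrow> real" where
  "OX i = (if i = 1 then 0 else if i = 2 then 1 else if i = 3 then 3/2 else if i = 4 then 1
           else if i = 5 then 0 else -1/2)"
definition OY :: "6 \<Rightarrow> real" where
  "OY i = (if i = 1 then 0 else if i = 2 then 0 else if i = 3 then sqrt 3/2 else if i = 4 then sqrt 3
           else if i = 5 then sqrt 3 else sqrt 3/2)"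
definition SG :: "6 \<Rightarrow> real" where
  "SG i = (if i = 1 \<or> i = 3 \<or> i = 5 then 1 else -1)"

lemma cv: "cell_vertex s t i = vector [3/2 * of_int s + OX i, sqrt 3/2 * of_int s + sqrt 3 * of_int t + OY i]"
  unfolding cell_vertex_def OX_def OY_def la_def lb_def lc_def
  by (simp add: vec_eq_iff forall_2 vector_2)

definition chair :: "real \<Rightarrow> real \<Rightarrow> real^2 \<Rightarrow> real^3" where
  "chair \<alpha> h p = vector [\<alpha> * p$1, \<alpha> * p$2, if 2 * p$1 / 3 \<in> \<int> then h else -h]"

lemma notInt1: "(of_int s :: real) + 2/3 \<notin> \<int>"
proof
  assume "(of_int s :: real) + 2/3 \<in> \<int>"
  then obtain k where k: "(of_int s :: real) + 2/3 = of_int k" by (auto elim: Ints_cases)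
  then have "(of_int (3 * k) :: real) = of_int (3 * s + 2)" by simp
  then have "3 * k = 3 * s + 2" by (simp only: of_int_eq_iff)
  then show False by presburger
qed

lemma notInt2: "(of_int s :: real) - 1/3 \<notin> \<int>"
proof
  assume "(of_int s :: real) - 1/3 \<in> \<int>"
  then obtain k where k: "(of_int s :: real) - 1/3 = of_int k" by (auto elim: Ints_cases)
  then have "(of_int (3 * k) :: real) = of_int (3 * s - 1)" by simp
  then have "3 * k = 3 * s - 1" by (simp only: of_int_eq_iff)
  then show False by presburger
qed

lemma sg_int: "(2 * (3/2 * of_int s + OX i) / 3 \<in> \<int>) = (SG i = 1)"
proof -
  have "i = 0 \<or> i = 1 \<or> i = 2 \<or> i = 3 \<or> i = 4 \<or> i = 5" by (rule exhaust_6)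
  then show ?thesis
  proof (elim disjE)
    assume "i = 0"
    then have "2 * (3/2 * of_int s + OX i) / 3 = (of_int s :: real) - 1/3" "SG i \<noteq> 1" by (simp_all add: OX_def SG_def)
    then show ?thesis using notInt2[of s] by metis
  next
    assume "i = 1" then show ?thesis by (simp add: OX_def SG_def)
  next
    assume "i = 2"
    then have "2 * (3/2 * of_int s + OX i) / 3 = (of_int s :: real) + 2/3" "SG i \<noteq> 1" by (simp_all add: OX_def SG_def)
    then show ?thesis using notInt1[of s] by metis
  next
    assume "i = 3"
    then have "2 * (3/2 * of_int s + OX i) / 3 = (of_int (s + 1) :: real)" "SG i = 1" by (simp_all add: OX_def SG_def)
    then show ?thesis by (metis Ints_of_int)
  next
    assume "i = 4"
    then have "2 * (3/2 * of_int s + OX i) / 3 = (of_int s :: real) + 2/3" "SG i \<noteq> 1" by (simp_all add: OX_def SG_def)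
    then show ?thesis using notInt1[of s] by metis
  next
    assume "i = 5" then show ?thesis by (simp add: OX_def SG_def)
  qed
qed

lemma chair_cell: "def_cell (chair \<alpha> h) s t $ i =
   vector [\<alpha> * (3/2 * of_int s + OX i), \<alpha> * (sqrt 3/2 * of_int s + sqrt 3 * of_int t + OY i), SG i * h]"
proof -
  have "SG i = 1 \<or> SG i = -1" by (simp add: SG_def)
  then show ?thesis
    unfolding def_cell_def chair_def cv using sg_int[of s i] by (auto simp: vector_2)
qed

lemma F1: "(OX i - OX (i-1))\<^sup>2 + (OY i - OY (i-1))\<^sup>2 = 1"
  using exhaust_6[of i] by (auto simp: OX_def OY_def power2_eq_square algebra_simps)
lemma F2: "(SG i - SG (i-1))\<^sup>2 = 4"
  using exhaust_6[of i] by (auto simp: SG_def power2_eq_square)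
lemma F3: "(OX i - OX (i-2))\<^sup>2 + (OY i - OY (i-2))\<^sup>2 = 3"
  using exhaust_6[of i] by (auto simp: OX_def OY_def power2_eq_square algebra_simps)
lemma F4: "SG i - SG (i-2) = 0"
  using exhaust_6[of i] by (auto simp: SG_def)
lemma F5: "(OX (i+1) - OX i) * (OX (i-1) - OX i) + (OY (i+1) - OY i) * (OY (i-1) - OY i) = -1/2"
  using exhaust_6[of i] by (auto simp: OX_def OY_def algebra_simps)
lemma F6: "(SG (i+1) - SG i) * (SG (i-1) - SG i) = 4"
  using exhaust_6[of i] by (auto simp: SG_def)

lemma chair_diff: "def_cell (chair \<alpha> h) s t $ i - def_cell (chair \<alpha> h) s t $ j =
   vector [\<alpha> * (OX i - OX j), \<alpha> * (OY i - OY j), (SG i - SG j) * h]"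
  unfolding chair_cell vec3_diff by (simp add: algebra_simps)

lemma chair_L: "norm (def_cell (chair \<alpha> h) s t $ i - def_cell (chair \<alpha> h) s t $ (i - 1)) = sqrt (\<alpha>\<^sup>2 + 4 * h\<^sup>2)"
proof -
  have "(\<alpha> * (OX i - OX (i-1)))\<^sup>2 + (\<alpha> * (OY i - OY (i-1)))\<^sup>2 + ((SG i - SG (i-1)) * h)\<^sup>2
        = \<alpha>\<^sup>2 * ((OX i - OX (i-1))\<^sup>2 + (OY i - OY (i-1))\<^sup>2) + (SG i - SG (i-1))\<^sup>2 * h\<^sup>2"
    by (simp add: power2_eq_square algebra_simps)
  then show ?thesis unfolding chair_diff vec3_norm F1 F2 by simp
qed

lemma chair_D: "\<alpha> \<ge> 0 \<Longrightarrow> norm (def_cell (chair \<alpha> h) s t $ i - def_cell (chair \<alpha> h) s t $ (i - 2)) = sqrt 3 * \<alpha>"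
proof -
  assume a: "\<alpha> \<ge> 0"
  have "(\<alpha> * (OX i - OX (i-2)))\<^sup>2 + (\<alpha> * (OY i - OY (i-2)))\<^sup>2 + ((SG i - SG (i-2)) * h)\<^sup>2
        = \<alpha>\<^sup>2 * ((OX i - OX (i-2))\<^sup>2 + (OY i - OY (i-2))\<^sup>2) + (SG i - SG (i-2))\<^sup>2 * h\<^sup>2"
    by (simp add: power2_eq_square algebra_simps)
  then show ?thesis unfolding chair_diff vec3_norm F3 F4 using a by (simp add: real_sqrt_mult mult.commute)
qed

lemma chair_inner: "(def_cell (chair \<alpha> h) s t $ (i+1) - def_cell (chair \<alpha> h) s t $ i) \<bullet>
     (def_cell (chair \<alpha> h) s t $ (i-1) - def_cell (chair \<alpha> h) s t $ i) = - \<alpha>\<^sup>2 / 2 + 4 * h\<^sup>2"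
proof -
  have "\<alpha> * (OX (i+1) - OX i) * (\<alpha> * (OX (i-1) - OX i)) + \<alpha> * (OY (i+1) - OY i) * (\<alpha> * (OY (i-1) - OY i))
        + (SG (i+1) - SG i) * h * ((SG (i-1) - SG i) * h)
      = \<alpha>\<^sup>2 * ((OX (i+1) - OX i) * (OX (i-1) - OX i) + (OY (i+1) - OY i) * (OY (i-1) - OY i))
        + ((SG (i+1) - SG i) * (SG (i-1) - SG i)) * h\<^sup>2"
    by (simp add: power2_eq_square algebra_simps)
  then show ?thesis unfolding chair_diff vec3_inner F5 F6 by simp
qed

lemma chair_energy:
  assumes l: "0 < l" and th: "0 < \<theta>" "\<theta> \<le> 2*pi/3"
  shows "\<exists>y. \<forall>s t. E_cell v2 v3 (def_cell y s t) = ereal (6 * angle_fun v2 v3 (l, l, \<theta>))"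
proof -
  define c where "c = cos \<theta>"
  have pi3: "pi > 3" by (rule pi_gt3)
  have c1: "c < 1" unfolding c_def using cos_monotone_0_pi[of 0 \<theta>] th pi3 by simp
  have c2: "c \<ge> -1/2" unfolding c_def using cos_monotone_0_pi_le[of \<theta> "2*pi/3"] th pi3 by (simp add: cos_120)
  define \<alpha> where "\<alpha> = sqrt (2 * l\<^sup>2 * (1 - c) / 3)"
  define h where "h = sqrt (l\<^sup>2 * (1 + 2 * c) / 3) / 2"
  have ap: "\<alpha> > 0" unfolding \<alpha>_def using l c1 by simp
  have a2: "\<alpha>\<^sup>2 = 2 * l\<^sup>2 * (1 - c) / 3" unfolding \<alpha>_def using c1 by simp
  have h2: "4 * h\<^sup>2 = l\<^sup>2 * (1 + 2 * c) / 3" unfolding h_def using c2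
    by (simp add: power_divide)
  have ah: "\<alpha>\<^sup>2 + 4 * h\<^sup>2 = l\<^sup>2" unfolding a2 h2 by (simp add: field_simps)
  have inn: "- \<alpha>\<^sup>2 / 2 + 4 * h\<^sup>2 = l\<^sup>2 * c" unfolding a2 h2 by (simp add: field_simps)
  show ?thesis
  proof (intro exI allI)
    fix s t
    define z where "z = def_cell (chair \<alpha> h) s t"
    have L: "norm (z$i - z$(i - 1)) = l" for i unfolding z_def chair_L ah using l by simp
    have L1: "norm (z$(i+1) - z$i) = l" for i using L[of "i+1"] by (simp add: six_arith)
    have L2: "norm (z$(i-1) - z$i) = l" for i using L[of i] by (simp add: norm_minus_commute)
    have D: "norm (z$i - z$(i - 2)) > 0" for i unfolding z_def chair_D[OF less_imp_le[OF ap]] using ap by simp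
    have nd: "\<forall>i. z$i \<noteq> z$(i - 1) \<and> z$i \<noteq> z$(i - 2)"
      using L D l by (metis less_irrefl norm_zero right_minus_eq)
    have T: "angle_at (z$i) (z$(i + 1)) (z$(i - 1)) = \<theta>" for i
    proof -
      have "angle_at (z$i) (z$(i + 1)) (z$(i - 1)) = arccos ((l\<^sup>2 * c) / (l * l))"
        unfolding angle_at_def L1 L2 using chair_inner[of \<alpha> h s t i] inn unfolding z_def by simp
      also have "\<dots> = arccos (cos \<theta>)" unfolding c_def using l by (simp add: power2_eq_square)
      also have "\<dots> = \<theta>" using th pi3 by (intro arccos_cos) auto
      finally show ?thesis .
    qed
    show "E_cell v2 v3 (def_cell (chair \<alpha> h) s t) = ereal (6 * angle_fun v2 v3 (l, l, \<theta>))"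
      unfolding z_def[symmetric] cell_decomp(1)[OF nd] using L L1 T by simp
  qed
qed


lemma bary_comp: "bary s t $ 1 = 1/2 + 3/2 * of_int s" "bary s t $ 2 = sqrt 3/2 + sqrt 3/2 * of_int s + sqrt 3 * of_int t"
  unfolding bary_def la_def lb_def by (simp_all add: vector_2)

lemma finite_cells: "finite (cells_in_ball m)"
proof -
  define M where "M = 2 * int m + 2"
  have "cells_in_ball m \<subseteq> {-M..M} \<times> {-M..M}"
  proof
    fix p assume "p \<in> cells_in_ball m"
    then obtain s t where p: "p = (s, t)" and n: "norm (bary s t) \<le> real m"
      unfolding cells_in_ball_def by auto
    have c1: "\<bar>1/2 + 3/2 * of_int s\<bar> \<le> real m"
      using component_le_norm_cart[of "bary s t" 1] n bary_comp by simp
    have c2: "\<bar>sqrt 3/2 + sqrt 3/2 * of_int s + sqrt 3 * of_int t\<bar> \<le> real m"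
      using component_le_norm_cart[of "bary s t" 2] n bary_comp by simp
    have "sqrt 3/2 + sqrt 3/2 * of_int s + sqrt 3 * of_int t = sqrt 3 * ((1 + of_int s + 2 * of_int t) / 2)"
      by (simp add: algebra_simps)
    then have "sqrt 3 * \<bar>(1 + of_int s + 2 * of_int t) / 2\<bar> \<le> real m" using c2 by (simp add: abs_mult)
    moreover have "\<bar>(1 + of_int s + 2 * of_int t) / 2\<bar> \<le> sqrt 3 * \<bar>(1 + of_int s + 2 * of_int t) / 2\<bar>"
    proof -
      have "(1::real) \<le> sqrt 3" by simp
      then show ?thesis using mult_right_mono[of 1 "sqrt 3" "\<bar>(1 + of_int s + 2 * of_int t) / 2\<bar>"] by simp
    qed
    ultimately have c3: "\<bar>(1 + of_int s + 2 * of_int t) / 2\<bar> \<le> (real m :: real)" by linarith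
    have "\<bar>real_of_int s\<bar> \<le> real m + 1" using c1 by linarith
    then have "\<bar>s\<bar> \<le> int m + 1" by linarith
    moreover have "\<bar>real_of_int t\<bar> \<le> 2 * real m + 2" using c3 \<open>\<bar>real_of_int s\<bar> \<le> real m + 1\<close> by (auto simp: abs_le_iff field_simps)
    then have "\<bar>t\<bar> \<le> 2 * int m + 2" by linarith
    ultimately show "p \<in> {-M..M} \<times> {-M..M}" unfolding p M_def by auto
  qed
  then show ?thesis by (rule finite_subset) auto
qed

lemma norm_bary00: "norm (bary 0 0) = 1"
proof -
  have "bary 0 0 = vector [1/2, sqrt 3/2]" unfolding bary_def by simp
  then show ?thesis
    by (simp add: norm_eq_sqrt_inner inner_vec_def sum_2 vector_2 power2_eq_square)
qed

lemma cells_nonempty: "m \<ge> 1 \<Longrightarrow> card (cells_in_ball m) > 0"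
proof -
  assume "m \<ge> 1"
  then have "(0, 0) \<in> cells_in_ball m" unfolding cells_in_ball_def using norm_bary00 by simp
  then show ?thesis using finite_cells card_gt_0_iff by blast
qed

lemma in_some_ball: "\<exists>m\<ge>1. (s, t) \<in> cells_in_ball m"
proof -
  define m where "m = max 1 (nat \<lceil>norm (bary s t)\<rceil>)"
  have "norm (bary s t) \<le> real m" unfolding m_def by linarith
  then show ?thesis unfolding cells_in_ball_def m_def by (intro exI[of _ m]) (auto simp: m_def)
qed


lemma avg_const:
  assumes "finite K" "card K > 0"
  shows "(\<Sum>k\<in>K. ereal r) / ereal (real (card K)) = ereal r"
  using assms by (simp add: card_gt_0_iff)

lemma avg_ge:
  assumes K: "finite K" "card K > 0" and f: "\<And>k. k \<in> K \<Longrightarrow> f k \<ge> ereal r"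
  shows "(\<Sum>k\<in>K. f k) / ereal (real (card K)) \<ge> ereal r"
proof -
  have "(\<Sum>k\<in>K. ereal r) \<le> (\<Sum>k\<in>K. f k)" by (rule sum_mono) (rule f)
  moreover have "(\<Sum>k\<in>K. ereal r) = ereal (real (card K)) * ereal r" by simp
  ultimately show ?thesis using K by (subst ereal_le_divide_pos) auto
qed

lemma avg_gt:
  assumes K: "finite K" and k0: "k0 \<in> K" and f: "\<And>k. k \<in> K \<Longrightarrow> f k \<ge> ereal r" and f0: "f k0 > ereal r"
  shows "(\<Sum>k\<in>K. f k) / ereal (real (card K)) > ereal r"
proof -
  have cK: "card K > 0" using K k0 card_gt_0_iff by blast
  define q where "q = real (card K - 1) * r"
  have "(\<Sum>k\<in>K - {k0}. ereal r) \<le> (\<Sum>k\<in>K - {k0}. f k)" by (rule sum_mono) (use f in auto)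
  moreover have "(\<Sum>k\<in>K - {k0}. ereal r) = ereal q" unfolding q_def using K k0 by (simp add: card_Diff_singleton)
  ultimately have sq: "ereal q \<le> (\<Sum>k\<in>K - {k0}. f k)" by simp
  have "(\<Sum>k\<in>K. f k) = f k0 + (\<Sum>k\<in>K - {k0}. f k)" using K k0 by (rule sum.remove)
  moreover have "ereal r + ereal q < f k0 + ereal q"
    using ereal_less_add[of "ereal q" "ereal r" "f k0"] f0 by (simp add: add.commute)
  moreover have "f k0 + ereal q \<le> f k0 + (\<Sum>k\<in>K - {k0}. f k)" using sq by (rule add_left_mono)
  ultimately have "ereal (r + q) < (\<Sum>k\<in>K. f k)" by simp
  moreover have "r + q = real (card K) * r" unfolding q_def using cK by (simp add: of_nat_diff algebra_simps)
  ultimately have "ereal (real (card K)) * ereal r < (\<Sum>k\<in>K. f k)" by simp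
  then show ?thesis using cK by (subst ereal_less_divide_pos) auto
qed

lemma E_def_const:
  assumes "\<And>s t. E_cell v2 v3 (def_cell y s t) = ereal r"
  shows "E_def v2 v3 y = ereal r"
proof -
  have "E_def v2 v3 y = (SUP m\<in>{1::nat..}. ereal r)"
    unfolding E_def_def
  proof (rule SUP_cong)
    fix m :: nat assume "m \<in> {1..}"
    then have c: "card (cells_in_ball m) > 0" using cells_nonempty by auto
    have "(\<Sum>(s, t)\<in>cells_in_ball m. E_cell v2 v3 (def_cell y s t)) = (\<Sum>k\<in>cells_in_ball m. ereal r)"
      by (rule sum.cong) (auto simp: assms)
    then show "(\<Sum>(s, t)\<in>cells_in_ball m. E_cell v2 v3 (def_cell y s t)) / ereal (real (card (cells_in_ball m))) = ereal r"
      using avg_const[OF finite_cells c] by simp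
  qed simp
  also have "\<dots> = ereal r" by simp
  finally show ?thesis .
qed

lemma E_cell_not_minf: "E_cell v2 v3 z \<noteq> -\<infinity>"
  unfolding E_cell_def by simp

context
  fixes v2 v3 :: "real \<Rightarrow> real" and \<delta> :: real
  assumes sa: "standing_assumptions v2 v3 \<delta>"
begin

lemma E_cell_ge: "E_cell v2 v3 z \<ge> ereal (-9)"
proof -
  obtain l t where lt: "0 < l" "0 < t" "t \<le> 2*pi/3" "ereal (6 * angle_fun v2 v3 (l, l, t)) \<le> E_cell v2 v3 z"
    using cell_lb[OF sa] by blast
  have pi3: "pi > 3" by (rule pi_gt3)
  have "cos t < 1" using cos_monotone_0_pi[of 0 t] lt pi3 by simp
  then have "l\<^sup>2 + l\<^sup>2 - 2 * l * l * cos t > 0" using lt(1)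
    by (simp add: power2_eq_square)
  then have "v2 (sqrt (l\<^sup>2 + l\<^sup>2 - 2 * l * l * cos t)) \<ge> -1" using v2_ge[OF sa] by simp
  moreover have "v2 l \<ge> -1" using v2_ge[OF sa] lt by simp
  moreover have "v3 t \<ge> 0" using v3_ge[OF sa, of t] lt pi3 by simp
  ultimately have "angle_fun v2 v3 (l, l, t) \<ge> -3/2" unfolding angle_fun_def by simp
  then have "ereal (-9) \<le> ereal (6 * angle_fun v2 v3 (l, l, t))" by simp
  then show ?thesis using lt(4) by (rule order_trans)
qed

end

theorem mainTheorem1:
  fixes v2 v3 :: "real \<Rightarrow> real" and \<delta> :: real and y :: "real^2 \<Rightarrow> real^3"
  assumes "standing_assumptions v2 v3 \<delta>"
  shows "ground_state v2 v3 y \<longleftrightarrow> (\<forall>s t. optimal_cell v2 v3 (def_cell y s t))"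
proof
  note sa = assms
  assume gs: "ground_state v2 v3 y"
  show "\<forall>s t. optimal_cell v2 v3 (def_cell y s t)"
  proof (rule ccontr)
    assume "\<not> (\<forall>s t. optimal_cell v2 v3 (def_cell y s t))"
    then obtain s0 t0 w where lt: "E_cell v2 v3 w < E_cell v2 v3 (def_cell y s0 t0)"
      unfolding optimal_cell_def by (auto simp: not_le)
    define c where "c = (INF w. E_cell v2 v3 w)"
    have Ey: "E_def v2 v3 y \<le> E_cell v2 v3 w'" for w'
    proof -
      obtain l t where lt: "0 < l" "0 < t" "t \<le> 2*pi/3" "ereal (6 * angle_fun v2 v3 (l, l, t)) \<le> E_cell v2 v3 w'"
        using cell_lb[OF sa] by blast
      obtain y1 where y1: "\<And>s t'. E_cell v2 v3 (def_cell y1 s t') = ereal (6 * angle_fun v2 v3 (l, l, t))"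
        using chair_energy[OF lt(1-3), of v2 v3] by blast
      have "E_def v2 v3 y \<le> E_def v2 v3 y1" using gs unfolding ground_state_def by blast
      also have "\<dots> = ereal (6 * angle_fun v2 v3 (l, l, t))" by (rule E_def_const) (rule y1)
      finally show ?thesis using lt(4) by simp
    qed
    then have Eyc: "E_def v2 v3 y \<le> c" unfolding c_def by (rule INF_greatest)
    have cw: "c \<le> E_cell v2 v3 w'" for w' unfolding c_def by (rule INF_lower) simp
    have "c \<ge> ereal (-9)" unfolding c_def by (rule INF_greatest) (rule E_cell_ge[OF sa])
    moreover have "c \<noteq> \<infinity>" using cw[of w] lt by auto
    ultimately obtain cr where cr: "c = ereal cr" by (cases c) auto
    obtain m0 where m0: "m0 \<ge> 1" "(s0, t0) \<in> cells_in_ball m0" using in_some_ball by blast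
    define f where "f = (\<lambda>(s, t). E_cell v2 v3 (def_cell y s t))"
    have "(\<Sum>k\<in>cells_in_ball m0. f k) / ereal (real (card (cells_in_ball m0))) > ereal cr"
    proof (rule avg_gt[OF finite_cells m0(2)])
      show "f k \<ge> ereal cr" for k unfolding f_def cr[symmetric] using cw by (auto split: prod.splits)
      show "f (s0, t0) > ereal cr" unfolding f_def cr[symmetric] using cw[of w] lt by simp
    qed
    moreover have "(\<Sum>k\<in>cells_in_ball m0. f k) / ereal (real (card (cells_in_ball m0))) \<le> E_def v2 v3 y"
      unfolding E_def_def f_def by (rule SUP_upper) (use m0 in simp)
    ultimately show False using Eyc cr by simp
  qed
next
  note sa = assms
  assume opt: "\<forall>s t. optimal_cell v2 v3 (def_cell y s t)"
  define e where "e = E_cell v2 v3 (def_cell y 0 0)"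
  have eall: "E_cell v2 v3 (def_cell y s t) = e" for s t
    using opt unfolding optimal_cell_def e_def by (metis order.antisym)
  have ele: "e \<le> E_cell v2 v3 w" for w using opt unfolding optimal_cell_def e_def by blast
  obtain y1 where y1: "\<And>s t'. E_cell v2 v3 (def_cell y1 s t') = ereal (6 * angle_fun v2 v3 (1, 1, 2*pi/3))"
    using chair_energy[of 1 "2*pi/3" v2 v3] by auto
  have "e \<noteq> \<infinity>" using ele[of "def_cell y1 0 0"] y1 by auto
  moreover have "e \<noteq> -\<infinity>" unfolding e_def by (rule E_cell_not_minf)
  ultimately obtain er where er: "e = ereal er" by (cases e) auto
  have Ey: "E_def v2 v3 y = ereal er" by (rule E_def_const) (simp add: eall er)
  show "ground_state v2 v3 y"
    unfolding ground_state_def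
  proof
    fix y'
    define f where "f = (\<lambda>(s, t). E_cell v2 v3 (def_cell y' s t))"
    have c1: "card (cells_in_ball 1) > 0" by (rule cells_nonempty) simp
    have "ereal er \<le> (\<Sum>k\<in>cells_in_ball 1. f k) / ereal (real (card (cells_in_ball 1)))"
      by (rule avg_ge[OF finite_cells c1]) (auto simp: f_def er[symmetric] ele split: prod.splits)
    also have "\<dots> \<le> E_def v2 v3 y'"
      unfolding E_def_def f_def by (rule SUP_upper) simp
    finally show "E_def v2 v3 y \<le> E_def v2 v3 y'" using Ey by simp
  qed
qed


end
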